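(* Let $n\ge1$, $p,q\in(0,1)^n$, and let $P=\operatorname{Ber}(p)$, $Q=\operatorname{Ber}(q)$ be probability measures on $\{0,1\}^n$. Then $$\sqrt{\prod_{i=1}^n\frac{1-(p_i-q_i)^2}{2}}\;\le\;\sum_{x\in\{0,1\}^n}\sqrt{P(x)Q(x)}\;\le\;\sqrt{\prod_{i=1}^n\big[1-(p_i-q_i)^2\big]}.$$
   Context: For $p=(p_1,\ldots,p_n)\in(0,1)^n$, $\operatorname{Ber}(p)$ is the product Bernoulli probability measure on $\{0,1\}^n$: $\operatorname{Ber}(p)(x)=\prod_{i=1}^n p_i^{x_i}(1-p_i)^{1-x_i}$. *)

theory Defs
  imports Complex_Main "HOL-Library.FuncSet"
begin

definition cube :: "nat \<Rightarrow> (nat \<Rightarrow> nat) set" where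
  "cube n = PiE {..<n} (\<lambda>_. {0, 1})"

definition Ber :: "nat \<Rightarrow> (nat \<Rightarrow> real) \<Rightarrow> (nat \<Rightarrow> nat) \<Rightarrow> real" where
  "Ber n p x = (\<Prod>i<n. p i ^ x i * (1 - p i) ^ (1 - x i))"

end

theory Submission
  imports Defs
begin

lemma sqrt_prod_lt:
  fixes n :: nat and f :: "nat \<Rightarrow> real"
  shows "sqrt (\<Prod>i<n. f i) = (\<Prod>i<n. sqrt (f i))"
  by (induction n) (simp_all add: real_sqrt_mult)

lemma coord_bounds:
  fixes p q :: real
  assumes "0 < p" "p < 1" "0 < q" "q < 1"
  shows "(1 - (p - q)^2) / 2 \<le> (sqrt ((1-p)*(1-q)) + sqrt (p*q))^2"
    and "(sqrt ((1-p)*(1-q)) + sqrt (p*q))^2 \<le> 1 - (p - q)^2"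
proof -
  have a: "(sqrt ((1-p)*(1-q)))^2 = (1-p)*(1-q)" using assms by simp
  have b: "(sqrt (p*q))^2 = p*q" using assms by simp
  have c: "sqrt ((1-p)*(1-q)) * sqrt (p*q) = sqrt ((p*(1-p))*(q*(1-q)))"
    by (simp add: real_sqrt_mult[symmetric] algebra_simps)
  have e: "(sqrt ((1-p)*(1-q)) + sqrt (p*q))^2 = (1-p)*(1-q) + p*q + 2*sqrt ((p*(1-p))*(q*(1-q)))"
    by (simp add: power2_sum a b c)
  have nn: "0 \<le> sqrt ((p*(1-p))*(q*(1-q)))" using assms by simp
  show "(1 - (p - q)^2) / 2 \<le> (sqrt ((1-p)*(1-q)) + sqrt (p*q))^2"
    proof -
    have "(1 - (p - q)^2) / 2 = (1-p)*(1-q) + p*q - (1-p-q)^2/2"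
      by (simp add: power2_eq_square field_simps)
    then show ?thesis unfolding e using nn zero_le_power2[of "1-p-q"] by linarith
  qed
next
  have a: "(sqrt ((1-p)*(1-q)))^2 = (1-p)*(1-q)" using assms by simp
  have b: "(sqrt (p*q))^2 = p*q" using assms by simp
  have c: "sqrt ((1-p)*(1-q)) * sqrt (p*q) = sqrt ((p*(1-p))*(q*(1-q)))"
    by (simp add: real_sqrt_mult[symmetric] algebra_simps)
  have e: "(sqrt ((1-p)*(1-q)) + sqrt (p*q))^2 = (1-p)*(1-q) + p*q + 2*sqrt ((p*(1-p))*(q*(1-q)))"
    by (simp add: power2_sum a b c)
  have x: "0 \<le> p*(1-p)" "0 \<le> q*(1-q)" using assms by auto
  have "2*sqrt ((p*(1-p))*(q*(1-q))) \<le> p*(1-p) + q*(1-q)"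
    using arith_geo_mean_sqrt[OF x] by (simp add: field_simps)
  then show "(sqrt ((1-p)*(1-q)) + sqrt (p*q))^2 \<le> 1 - (p - q)^2"
    unfolding e by (simp add: power2_eq_square algebra_simps)
qed

theorem lemma1:
  fixes n :: nat and p q :: "nat \<Rightarrow> real"
  assumes "n \<ge> 1"
    and "\<And>i. i < n \<Longrightarrow> 0 < p i \<and> p i < 1"
    and "\<And>i. i < n \<Longrightarrow> 0 < q i \<and> q i < 1"
  shows "sqrt (\<Prod>i<n. (1 - (p i - q i)^2) / 2)
           \<le> (\<Sum>x\<in>cube n. sqrt (Ber n p x * Ber n q x)) \<and>
         (\<Sum>x\<in>cube n. sqrt (Ber n p x * Ber n q x))
           \<le> sqrt (\<Prod>i<n. 1 - (p i - q i)^2)"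
proof -
  define f where "f i k = sqrt (p i ^ k * (1 - p i) ^ (1 - k) * (q i ^ k * (1 - q i) ^ (1 - k)))" for i k
  define b where "b i = sqrt ((1 - p i) * (1 - q i)) + sqrt (p i * q i)" for i
  have S: "(\<Sum>x\<in>cube n. sqrt (Ber n p x * Ber n q x)) = (\<Prod>i<n. b i)"
  proof -
    have "(\<Sum>x\<in>cube n. sqrt (Ber n p x * Ber n q x)) = (\<Sum>x\<in>cube n. \<Prod>i<n. f i (x i))"
      unfolding Ber_def f_def by (simp add: prod.distrib[symmetric] sqrt_prod_lt)
    also have "\<dots> = (\<Prod>i<n. \<Sum>k\<in>{0,1}. f i k)"
      unfolding cube_def by (rule prod_sum_PiE[symmetric]) auto
    also have "\<dots> = (\<Prod>i<n. b i)"
      by (rule prod.cong) (auto simp: f_def b_def mult.commute)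
    finally show ?thesis .
  qed
  have b0: "0 \<le> b i" if "i < n" for i unfolding b_def using assms(2,3)[OF that] by simp
  have sq: "sqrt (\<Prod>i<n. (b i)^2) = (\<Prod>i<n. b i)"
    unfolding sqrt_prod_lt by (rule prod.cong) (simp_all add: b0)
  have L: "(\<Prod>i<n. (1 - (p i - q i)^2) / 2) \<le> (\<Prod>i<n. (b i)^2)"
  proof (rule prod_mono)
    fix i assume "i \<in> {..<n}"
    then have "0 < p i" "p i < 1" "0 < q i" "q i < 1" using assms by auto
    note cb = coord_bounds[OF this]
    have "0 \<le> 1 - (p i - q i)^2"
      using cb(2) by (smt (verit) zero_le_power2)
    then show "0 \<le> (1 - (p i - q i)^2) / 2 \<and> (1 - (p i - q i)^2) / 2 \<le> (b i)^2"
      using cb(1) unfolding b_def by simp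
  qed
  have U: "(\<Prod>i<n. (b i)^2) \<le> (\<Prod>i<n. 1 - (p i - q i)^2)"
  proof (rule prod_mono)
    fix i assume "i \<in> {..<n}"
    then have "0 < p i" "p i < 1" "0 < q i" "q i < 1" using assms by auto
    note cb = coord_bounds[OF this]
    then show "0 \<le> (b i)^2 \<and> (b i)^2 \<le> 1 - (p i - q i)^2"
      unfolding b_def by simp
  qed
  show ?thesis unfolding S
    using real_sqrt_le_mono[OF L] real_sqrt_le_mono[OF U] sq by simp
qed

end
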